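(* For any finite simple graphs $H_1$ and $H_2$, $$\rho_R(H_1+H_2)=\rho_R(H_1)+\rho_R(H_2),$$ where $H_1+H_2$ denotes the join of $H_1$ and $H_2$.
   Context: The join $H_1+H_2$ is the graph obtained from the disjoint union of $H_1$ and $H_2$ by adding all edges between $V(H_1)$ and $V(H_2)$. If $V(H)=\{h_1,\ldots,h_n\}$, a replication graph of $H$ is a graph $G$ obtained by replacing each vertex $h_i$ by a clique $K_i$ with $|K_i|\ge1$ (cliques pairwise vertex-disjoint), where two vertices in different cliques $K_i,K_j$ are adjacent iff $h_ih_j\in E(H)$. $\rho_R(H)$ is the minimum order of a replication graph $G$ of $H$ such that every proper vertex coloring of $G$ admits a choice of exactly one vertex from each clique $K_i$ with all chosen vertices of pairwise different colors. *)

theory Defs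
  imports Main
begin

text \<open>A finite simple graph is given by a finite vertex set V and a symmetric,
irreflexive adjacency relation E (only its restriction to V matters).\<close>

definition simple_graph :: "'a set \<Rightarrow> ('a \<Rightarrow> 'a \<Rightarrow> bool) \<Rightarrow> bool" where
  "simple_graph V E \<longleftrightarrow> finite V \<and> (\<forall>x\<in>V. \<forall>y\<in>V. E x y \<longrightarrow> E y x) \<and> (\<forall>x\<in>V. \<not> E x x)"

definition join_V :: "'a set \<Rightarrow> 'b set \<Rightarrow> ('a + 'b) set" where
  "join_V V1 V2 = Inl ` V1 \<union> Inr ` V2"

fun join_E :: "('a \<Rightarrow> 'a \<Rightarrow> bool) \<Rightarrow> ('b \<Rightarrow> 'b \<Rightarrow> bool) \<Rightarrow> ('a + 'b) \<Rightarrow> ('a + 'b) \<Rightarrow> bool" where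
  "join_E E1 E2 (Inl x) (Inl y) = E1 x y"
| "join_E E1 E2 (Inr x) (Inr y) = E2 x y"
| "join_E E1 E2 (Inl x) (Inr y) = True"
| "join_E E1 E2 (Inr x) (Inl y) = True"

text \<open>Replication graph of (V,E) with clique sizes m h (m h \<ge> 1): vertex h is replaced
by the clique {(h,i) | i < m h}.\<close>

definition rep_V :: "'a set \<Rightarrow> ('a \<Rightarrow> nat) \<Rightarrow> ('a \<times> nat) set" where
  "rep_V V m = {(h, i). h \<in> V \<and> i < m h}"

definition rep_E :: "('a \<Rightarrow> 'a \<Rightarrow> bool) \<Rightarrow> ('a \<times> nat) \<Rightarrow> ('a \<times> nat) \<Rightarrow> bool" where
  "rep_E E u v \<longleftrightarrow> (fst u = fst v \<and> snd u \<noteq> snd v) \<or> (fst u \<noteq> fst v \<and> E (fst u) (fst v))"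

text \<open>Proper vertex colouring of a graph (colours are natural numbers; for finite
graphs this loses no generality).\<close>

definition proper_coloring :: "'v set \<Rightarrow> ('v \<Rightarrow> 'v \<Rightarrow> bool) \<Rightarrow> ('v \<Rightarrow> nat) \<Rightarrow> bool" where
  "proper_coloring W F c \<longleftrightarrow> (\<forall>u\<in>W. \<forall>v\<in>W. F u v \<longrightarrow> c u \<noteq> c v)"

definition good_replication :: "'a set \<Rightarrow> ('a \<Rightarrow> 'a \<Rightarrow> bool) \<Rightarrow> ('a \<Rightarrow> nat) \<Rightarrow> bool" where
  "good_replication V E m \<longleftrightarrow>
     (\<forall>h\<in>V. 1 \<le> m h) \<and>
     (\<forall>c. proper_coloring (rep_V V m) (rep_E E) c \<longrightarrow>
        (\<exists>f. (\<forall>h\<in>V. f h < m h) \<and> inj_on (\<lambda>h. c (h, f h)) V))"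

definition rho_R :: "'a set \<Rightarrow> ('a \<Rightarrow> 'a \<Rightarrow> bool) \<Rightarrow> nat" where
  "rho_R V E = (LEAST n. \<exists>m. good_replication V E m \<and> n = (\<Sum>h\<in>V. m h))"

end

theory Submission
  imports Defs
begin

lemma rep_V_Sigma: "rep_V V m = Sigma V (\<lambda>h. {..<m h})"
  by (auto simp: rep_V_def)

lemma finite_rep_V: "finite V \<Longrightarrow> finite (rep_V V m)"
  by (simp add: rep_V_Sigma)

lemma rep_V_join_Inl[simp]: "((Inl h, i) \<in> rep_V (join_V V1 V2) m) \<longleftrightarrow> h \<in> V1 \<and> i < m (Inl h)"
  by (auto simp: rep_V_def join_V_def)

lemma rep_V_join_Inr[simp]: "((Inr h, i) \<in> rep_V (join_V V1 V2) m) \<longleftrightarrow> h \<in> V2 \<and> i < m (Inr h)"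
  by (auto simp: rep_V_def join_V_def)

lemma join_V_Inl[simp]: "(Inl h \<in> join_V V1 V2) \<longleftrightarrow> h \<in> V1"
  by (auto simp: join_V_def)

lemma join_V_Inr[simp]: "(Inr h \<in> join_V V1 V2) \<longleftrightarrow> h \<in> V2"
  by (auto simp: join_V_def)

lemma rep_V_mem[simp]: "((h, i) \<in> rep_V V m) \<longleftrightarrow> h \<in> V \<and> i < m h"
  by (auto simp: rep_V_def)

lemma exists_good:
  assumes "finite V"
  shows "good_replication V E (\<lambda>_. card V + 1)"
proof -
  have main: "\<And>c. proper_coloring (rep_V V (\<lambda>_. card V + 1)) (rep_E E) c \<Longrightarrow>
      \<exists>f. (\<forall>h\<in>V. f h < card V + 1) \<and> inj_on (\<lambda>h. c (h, f h)) V"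
  proof -
    fix c
    assume pc: "proper_coloring (rep_V V (\<lambda>_. card V + 1)) (rep_E E) c"
    define n where "n = card V + 1"
    have injc: "\<And>h. h \<in> V \<Longrightarrow> inj_on (\<lambda>i. c (h, i)) {..<n}"
    proof (rule inj_onI)
      fix h x y assume "h \<in> V" "x \<in> {..<n}" "y \<in> {..<n}" "c (h, x) = c (h, y)"
      note hx = this
      show "x = y"
      proof (rule ccontr)
        assume "x \<noteq> y"
        then have e: "rep_E E (h,x) (h,y)" by (simp add: rep_E_def)
        have m: "(h,x) \<in> rep_V V (\<lambda>_. card V + 1)" "(h,y) \<in> rep_V V (\<lambda>_. card V + 1)"
          using hx by (auto simp: n_def)
        show False using pc m e hx(4) unfolding proper_coloring_def by blast
      qed
    qed
    have "\<And>W. W \<subseteq> V \<Longrightarrow> \<exists>f. (\<forall>h\<in>W. f h < n) \<and> inj_on (\<lambda>h. c (h, f h)) W"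
    proof -
      fix W assume "W \<subseteq> V"
      moreover have "finite W" using \<open>W \<subseteq> V\<close> assms finite_subset by blast
      ultimately have "finite W \<and> W \<subseteq> V" by blast
      then have "finite W" "W \<subseteq> V" by auto
      then show "\<exists>f. (\<forall>h\<in>W. f h < n) \<and> inj_on (\<lambda>h. c (h, f h)) W"
      proof (induction W rule: finite_induct)
        case empty then show ?case by auto
      next
        case (insert x F)
        then obtain f where f: "\<forall>h\<in>F. f h < n" "inj_on (\<lambda>h. c (h, f h)) F" by auto
        let ?T = "(\<lambda>h. c (h, f h)) ` F"
        have "card ?T \<le> card F" by (rule card_image_le) (simp add: insert)
        also have "card F < n" using insert card_mono[OF assms \<open>insert x F \<subseteq> V\<close>]
          by (simp add: n_def)
        finally have ct: "card ?T < n" .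
        have "card ((\<lambda>i. c (x, i)) ` {..<n}) = n"
          using injc[of x] insert by (simp add: card_image)
        moreover have finT: "finite ?T" using insert(1) by simp
        ultimately have "\<not> (\<lambda>i. c (x, i)) ` {..<n} \<subseteq> ?T"
          using ct card_mono[OF finT, of "(\<lambda>i. c (x, i)) ` {..<n}"] by linarith
        then obtain i where i: "i < n" "c (x, i) \<notin> ?T" by auto
        define f' where "f' = f(x := i)"
        have "\<forall>h\<in>insert x F. f' h < n" using f i by (auto simp: f'_def)
        moreover have "inj_on (\<lambda>h. c (h, f' h)) (insert x F)"
        proof -
          have "inj_on (\<lambda>h. c (h, f' h)) F"
          proof -
            have eq: "\<And>h. h \<in> F \<Longrightarrow> c (h, f' h) = c (h, f h)" using insert(2) by (auto simp: f'_def)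
            show ?thesis using inj_on_cong[of F "\<lambda>h. c (h, f' h)" "\<lambda>h. c (h, f h)", OF eq] f(2) by simp
          qed
          moreover have "(\<lambda>h. c (h, f' h)) ` F = ?T"
            using insert(2) by (intro image_cong) (auto simp: f'_def)
          moreover have "c (x, f' x) = c (x, i)" by (simp add: f'_def)
          ultimately have "c (x, f' x) \<notin> (\<lambda>h. c (h, f' h)) ` F" using i(2) by simp
          moreover note \<open>inj_on (\<lambda>h. c (h, f' h)) F\<close>
          ultimately show ?thesis using insert(2) by simp
        qed
        ultimately show ?case by blast
      qed
    qed
    then show "\<exists>f. (\<forall>h\<in>V. f h < card V + 1) \<and> inj_on (\<lambda>h. c (h, f h)) V"
      unfolding n_def by blast
  qed
  show ?thesis unfolding good_replication_def using main by auto
qed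

lemma good_join_left:
  assumes fin1: "finite V1" and fin2: "finite V2"
    and g: "good_replication (join_V V1 V2) (join_E E1 E2) m"
  shows "good_replication V1 E1 (m \<circ> Inl)"
  unfolding good_replication_def
proof (intro conjI allI impI)
  show "\<forall>h\<in>V1. 1 \<le> (m \<circ> Inl) h" using g[unfolded good_replication_def, THEN conjunct1] by simp
next
  fix c1 assume pc1: "proper_coloring (rep_V V1 (m \<circ> Inl)) (rep_E E1) c1"
  have "finite (rep_V V2 (m \<circ> Inr))" using fin2 by (rule finite_rep_V)
  then obtain gg :: "'b \<times> nat \<Rightarrow> nat" where ginj: "inj_on gg (rep_V V2 (m \<circ> Inr))"
    using finite_imp_inj_to_nat_seg by blast
  define N where "N = Suc (Max (insert 0 (c1 ` rep_V V1 (m \<circ> Inl))))"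
  define c :: "('a + 'b) \<times> nat \<Rightarrow> nat" where
    "c = (\<lambda>x. case fst x of Inl h \<Rightarrow> c1 (h, snd x) | Inr h \<Rightarrow> N + gg (h, snd x))"
  have pc: "proper_coloring (rep_V (join_V V1 V2) m) (rep_E (join_E E1 E2)) c"
    unfolding proper_coloring_def
  proof (intro ballI impI)
    fix u v assume u: "u \<in> rep_V (join_V V1 V2) m" and v: "v \<in> rep_V (join_V V1 V2) m"
      and e: "rep_E (join_E E1 E2) u v"
    obtain a i where ua: "u = (a, i)" by (cases u)
    obtain b j where vb: "v = (b, j)" by (cases v)
    show "c u \<noteq> c v"
    proof (cases a)
      case (Inl h)
      show ?thesis
      proof (cases b)
        case (Inl h')
        have "rep_E E1 (h, i) (h', j)" using e ua vb Inl \<open>a = Inl h\<close> by (auto simp: rep_E_def)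
        moreover have "(h,i) \<in> rep_V V1 (m \<circ> Inl)" "(h',j) \<in> rep_V V1 (m \<circ> Inl)"
          using u v ua vb Inl \<open>a = Inl h\<close> by simp_all
        ultimately have "c1 (h,i) \<noteq> c1 (h',j)" using pc1 unfolding proper_coloring_def by blast
        then show ?thesis using ua vb Inl \<open>a = Inl h\<close> by (simp add: c_def)
      next
        case (Inr h')
        have "c1 (h, i) \<in> insert 0 (c1 ` rep_V V1 (m \<circ> Inl))" using u ua \<open>a = Inl h\<close> by auto
        moreover have "finite (insert 0 (c1 ` rep_V V1 (m \<circ> Inl)))"
          using finite_rep_V[OF fin1] by blast
        ultimately have "c1 (h, i) < N" unfolding N_def using Max_ge le_imp_less_Suc by blast
        then show ?thesis using ua vb Inr \<open>a = Inl h\<close> by (auto simp: c_def)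
      qed
    next
      case (Inr h)
      show ?thesis
      proof (cases b)
        case (Inl h')
        have "c1 (h', j) \<in> insert 0 (c1 ` rep_V V1 (m \<circ> Inl))" using v vb Inl by auto
        moreover have "finite (insert 0 (c1 ` rep_V V1 (m \<circ> Inl)))"
          using finite_rep_V[OF fin1] by blast
        ultimately have "c1 (h', j) < N" unfolding N_def using Max_ge le_imp_less_Suc by blast
        then show ?thesis using ua vb Inl \<open>a = Inr h\<close> by (auto simp: c_def)
      next
        case (Inr h')
        have "u \<noteq> v" using e by (auto simp: rep_E_def)
        moreover have "(h, i) \<in> rep_V V2 (m \<circ> Inr)" "(h', j) \<in> rep_V V2 (m \<circ> Inr)"
          using u v ua vb Inr \<open>a = Inr h\<close> by auto
        ultimately have "gg (h, i) \<noteq> gg (h', j)"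
          using ginj ua vb Inr \<open>a = Inr h\<close> unfolding inj_on_def by blast
        then show ?thesis using ua vb Inr \<open>a = Inr h\<close> by (auto simp: c_def)
      qed
    qed
  qed
  then obtain f where f: "\<forall>h\<in>join_V V1 V2. f h < m h" "inj_on (\<lambda>h. c (h, f h)) (join_V V1 V2)"
    using g[unfolded good_replication_def, THEN conjunct2, rule_format, OF pc] by blast
  show "\<exists>f. (\<forall>h\<in>V1. f h < (m \<circ> Inl) h) \<and> inj_on (\<lambda>h. c1 (h, f h)) V1"
  proof (intro exI conjI)
    show "\<forall>h\<in>V1. (f \<circ> Inl) h < (m \<circ> Inl) h" using f(1) by (auto simp: join_V_def)
    show "inj_on (\<lambda>h. c1 (h, (f \<circ> Inl) h)) V1"
    proof (rule inj_onI)
      fix x y assume xy: "x \<in> V1" "y \<in> V1" "c1 (x, (f \<circ> Inl) x) = c1 (y, (f \<circ> Inl) y)"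
      then have "c (Inl x, f (Inl x)) = c (Inl y, f (Inl y))" by (simp add: c_def)
      moreover have "Inl x \<in> join_V V1 V2" "Inl y \<in> join_V V1 V2" using xy by auto
      ultimately have "Inl x = (Inl y :: 'a + 'b)" using inj_onD[OF f(2)] by blast
      then show "x = y" by simp
    qed
  qed
qed


lemma good_join_right:
  assumes fin1: "finite V1" and fin2: "finite V2"
    and g: "good_replication (join_V V1 V2) (join_E E1 E2) m"
  shows "good_replication V2 E2 (m \<circ> Inr)"
  unfolding good_replication_def
proof (intro conjI allI impI)
  show "\<forall>h\<in>V2. 1 \<le> (m \<circ> Inr) h" using g[unfolded good_replication_def, THEN conjunct1] by simp
next
  fix c2 assume pc2: "proper_coloring (rep_V V2 (m \<circ> Inr)) (rep_E E2) c2"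
  have "finite (rep_V V1 (m \<circ> Inl))" using fin1 by (rule finite_rep_V)
  then obtain gg :: "'a \<times> nat \<Rightarrow> nat" where ginj: "inj_on gg (rep_V V1 (m \<circ> Inl))"
    using finite_imp_inj_to_nat_seg by blast
  define N where "N = Suc (Max (insert 0 (c2 ` rep_V V2 (m \<circ> Inr))))"
  have finN: "finite (insert 0 (c2 ` rep_V V2 (m \<circ> Inr)))"
    using finite_rep_V[OF fin2] by blast
  define c :: "('a + 'b) \<times> nat \<Rightarrow> nat" where
    "c = (\<lambda>x. case fst x of Inl h \<Rightarrow> N + gg (h, snd x) | Inr h \<Rightarrow> c2 (h, snd x))"
  have pc: "proper_coloring (rep_V (join_V V1 V2) m) (rep_E (join_E E1 E2)) c"
    unfolding proper_coloring_def
  proof (intro ballI impI)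
    fix u v assume u: "u \<in> rep_V (join_V V1 V2) m" and v: "v \<in> rep_V (join_V V1 V2) m"
      and e: "rep_E (join_E E1 E2) u v"
    obtain a i where ua: "u = (a, i)" by (cases u)
    obtain b j where vb: "v = (b, j)" by (cases v)
    show "c u \<noteq> c v"
    proof (cases a)
      case (Inr h)
      show ?thesis
      proof (cases b)
        case (Inr h')
        have "rep_E E2 (h, i) (h', j)" using e ua vb Inr \<open>a = Inr h\<close> by (auto simp: rep_E_def)
        moreover have "(h,i) \<in> rep_V V2 (m \<circ> Inr)" "(h',j) \<in> rep_V V2 (m \<circ> Inr)"
          using u v ua vb Inr \<open>a = Inr h\<close> by simp_all
        ultimately have "c2 (h,i) \<noteq> c2 (h',j)" using pc2 unfolding proper_coloring_def by blast
        then show ?thesis using ua vb Inr \<open>a = Inr h\<close> by (simp add: c_def)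
      next
        case (Inl h')
        have "c2 (h, i) \<in> insert 0 (c2 ` rep_V V2 (m \<circ> Inr))" using u ua \<open>a = Inr h\<close> by auto
        then have "c2 (h, i) < N" unfolding N_def using finN Max_ge le_imp_less_Suc by blast
        then show ?thesis using ua vb Inl \<open>a = Inr h\<close> by (auto simp: c_def)
      qed
    next
      case (Inl h)
      show ?thesis
      proof (cases b)
        case (Inr h')
        have "c2 (h', j) \<in> insert 0 (c2 ` rep_V V2 (m \<circ> Inr))" using v vb Inr by auto
        then have "c2 (h', j) < N" unfolding N_def using finN Max_ge le_imp_less_Suc by blast
        then show ?thesis using ua vb Inr \<open>a = Inl h\<close> by (auto simp: c_def)
      next
        case (Inl h')
        have "u \<noteq> v" using e by (auto simp: rep_E_def)
        moreover have "(h, i) \<in> rep_V V1 (m \<circ> Inl)" "(h', j) \<in> rep_V V1 (m \<circ> Inl)"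
          using u v ua vb Inl \<open>a = Inl h\<close> by auto
        ultimately have "gg (h, i) \<noteq> gg (h', j)"
          using ginj ua vb Inl \<open>a = Inl h\<close> unfolding inj_on_def by blast
        then show ?thesis using ua vb Inl \<open>a = Inl h\<close> by (auto simp: c_def)
      qed
    qed
  qed
  then obtain f where f: "\<forall>h\<in>join_V V1 V2. f h < m h" "inj_on (\<lambda>h. c (h, f h)) (join_V V1 V2)"
    using g[unfolded good_replication_def, THEN conjunct2, rule_format, OF pc] by blast
  show "\<exists>f. (\<forall>h\<in>V2. f h < (m \<circ> Inr) h) \<and> inj_on (\<lambda>h. c2 (h, f h)) V2"
  proof (intro exI conjI)
    show "\<forall>h\<in>V2. (f \<circ> Inr) h < (m \<circ> Inr) h" using f(1) by (auto simp: join_V_def)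
    show "inj_on (\<lambda>h. c2 (h, (f \<circ> Inr) h)) V2"
    proof (rule inj_onI)
      fix x y assume xy: "x \<in> V2" "y \<in> V2" "c2 (x, (f \<circ> Inr) x) = c2 (y, (f \<circ> Inr) y)"
      then have "c (Inr x, f (Inr x)) = c (Inr y, f (Inr y))" by (simp add: c_def)
      moreover have "Inr x \<in> join_V V1 V2" "Inr y \<in> join_V V1 V2" using xy by auto
      ultimately have "Inr x = (Inr y :: 'a + 'b)" using inj_onD[OF f(2)] by blast
      then show "x = y" by simp
    qed
  qed
qed

lemma good_join_combine:
  assumes g1: "good_replication V1 E1 m1" and g2: "good_replication V2 E2 m2"
  shows "good_replication (join_V V1 V2) (join_E E1 E2) (case_sum m1 m2)"
  unfolding good_replication_def
proof (intro conjI allI impI)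
  show "\<forall>h\<in>join_V V1 V2. 1 \<le> case_sum m1 m2 h"
    using g1[unfolded good_replication_def, THEN conjunct1] g2[unfolded good_replication_def, THEN conjunct1]
    by (auto simp: join_V_def)
next
  fix c assume pc: "proper_coloring (rep_V (join_V V1 V2) (case_sum m1 m2)) (rep_E (join_E E1 E2)) c"
  have pcD: "\<And>u v. u \<in> rep_V (join_V V1 V2) (case_sum m1 m2) \<Longrightarrow> v \<in> rep_V (join_V V1 V2) (case_sum m1 m2)
      \<Longrightarrow> rep_E (join_E E1 E2) u v \<Longrightarrow> c u \<noteq> c v"
    using pc unfolding proper_coloring_def by blast
  define c1 where "c1 = (\<lambda>x. c (Inl (fst x), snd x))"
  define c2 where "c2 = (\<lambda>x. c (Inr (fst x), snd x))"
  have "proper_coloring (rep_V V1 m1) (rep_E E1) c1"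
    unfolding proper_coloring_def
  proof (intro ballI impI)
    fix u v assume uv: "u \<in> rep_V V1 m1" "v \<in> rep_V V1 m1" "rep_E E1 u v"
    obtain a i b j where ab: "u = (a, i)" "v = (b, j)" by (cases u, cases v)
    have "(Inl a, i) \<in> rep_V (join_V V1 V2) (case_sum m1 m2)"
      "(Inl b, j) \<in> rep_V (join_V V1 V2) (case_sum m1 m2)" using uv ab by simp_all
    moreover have "rep_E (join_E E1 E2) (Inl a, i) (Inl b, j)"
      using uv(3) ab unfolding rep_E_def by simp
    ultimately have "c (Inl a, i) \<noteq> c (Inl b, j)" by (rule pcD)
    then show "c1 u \<noteq> c1 v" using ab by (simp add: c1_def)
  qed
  note pcc1 = this
  obtain f1 where f1: "\<forall>h\<in>V1. f1 h < m1 h" "inj_on (\<lambda>h. c1 (h, f1 h)) V1"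
    using g1[unfolded good_replication_def, THEN conjunct2, rule_format, OF pcc1] by blast
  have "proper_coloring (rep_V V2 m2) (rep_E E2) c2"
    unfolding proper_coloring_def
  proof (intro ballI impI)
    fix u v assume uv: "u \<in> rep_V V2 m2" "v \<in> rep_V V2 m2" "rep_E E2 u v"
    obtain a i b j where ab: "u = (a, i)" "v = (b, j)" by (cases u, cases v)
    have "(Inr a, i) \<in> rep_V (join_V V1 V2) (case_sum m1 m2)"
      "(Inr b, j) \<in> rep_V (join_V V1 V2) (case_sum m1 m2)" using uv ab by simp_all
    moreover have "rep_E (join_E E1 E2) (Inr a, i) (Inr b, j)"
      using uv(3) ab unfolding rep_E_def by simp
    ultimately have "c (Inr a, i) \<noteq> c (Inr b, j)" by (rule pcD)
    then show "c2 u \<noteq> c2 v" using ab by (simp add: c2_def)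
  qed
  note pcc2 = this
  obtain f2 where f2: "\<forall>h\<in>V2. f2 h < m2 h" "inj_on (\<lambda>h. c2 (h, f2 h)) V2"
    using g2[unfolded good_replication_def, THEN conjunct2, rule_format, OF pcc2] by blast
  show "\<exists>f. (\<forall>h\<in>join_V V1 V2. f h < case_sum m1 m2 h) \<and>
            inj_on (\<lambda>h. c (h, f h)) (join_V V1 V2)"
  proof (intro exI conjI)
    show "\<forall>h\<in>join_V V1 V2. case_sum f1 f2 h < case_sum m1 m2 h"
      using f1 f2 by (auto simp: join_V_def)
    show "inj_on (\<lambda>h. c (h, case_sum f1 f2 h)) (join_V V1 V2)"
    proof (rule inj_onI)
      fix x y assume x: "x \<in> join_V V1 V2" and y: "y \<in> join_V V1 V2"
        and eq: "c (x, case_sum f1 f2 x) = c (y, case_sum f1 f2 y)"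
      show "x = y"
      proof (cases x)
        case (Inl a)
        show ?thesis
        proof (cases y)
          case (Inl b)
          have "c1 (a, f1 a) = c1 (b, f1 b)" using eq Inl \<open>x = Inl a\<close> by (simp add: c1_def)
          then have "a = b" using inj_onD[OF f1(2)] x y Inl \<open>x = Inl a\<close> by auto
          then show ?thesis using Inl \<open>x = Inl a\<close> by simp
        next
          case (Inr b)
          have "c (Inl a, f1 a) \<noteq> c (Inr b, f2 b)"
            apply (rule pcD)
            using x y Inr \<open>x = Inl a\<close> f1 f2 by (simp_all add: rep_E_def)
          then show ?thesis using eq Inr \<open>x = Inl a\<close> by simp
        qed
      next
        case (Inr a)
        show ?thesis
        proof (cases y)
          case (Inr b)
          have "c2 (a, f2 a) = c2 (b, f2 b)" using eq Inr \<open>x = Inr a\<close> by (simp add: c2_def)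
          then have "a = b" using inj_onD[OF f2(2)] x y Inr \<open>x = Inr a\<close> by auto
          then show ?thesis using Inr \<open>x = Inr a\<close> by simp
        next
          case (Inl b)
          have "c (Inl b, f1 b) \<noteq> c (Inr a, f2 a)"
            apply (rule pcD)
            using x y Inl \<open>x = Inr a\<close> f1 f2 by (simp_all add: rep_E_def)
          then show ?thesis using eq Inl \<open>x = Inr a\<close> by simp
        qed
      qed
    qed
  qed
qed

lemma sum_join:
  assumes "finite V1" "finite V2"
  shows "sum m (join_V V1 V2) = sum (m \<circ> Inl) V1 + sum (m \<circ> Inr) V2"
proof -
  have "sum m (join_V V1 V2) = sum m (Inl ` V1) + sum m (Inr ` V2)"
    unfolding join_V_def using assms by (intro sum.union_disjoint) auto
  also have "\<dots> = sum (m \<circ> Inl) V1 + sum (m \<circ> Inr) V2"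
    by (simp add: sum.reindex)
  finally show ?thesis .
qed

lemma rho_le:
  assumes "good_replication V E m"
  shows "rho_R V E \<le> sum m V"
  unfolding rho_R_def using assms by (intro Least_le) blast

lemma rho_attained:
  assumes "finite V"
  shows "\<exists>m. good_replication V E m \<and> rho_R V E = sum m V"
  unfolding rho_R_def
  by (rule LeastI[of _ "sum (\<lambda>_. card V + 1) V"]) (use exists_good[OF assms] in blast)

theorem corollary5p1:
  fixes V1 :: "'a set" and E1 :: "'a \<Rightarrow> 'a \<Rightarrow> bool"
    and V2 :: "'b set" and E2 :: "'b \<Rightarrow> 'b \<Rightarrow> bool"
  assumes "simple_graph V1 E1" and "simple_graph V2 E2"
  shows "rho_R (join_V V1 V2) (join_E E1 E2) = rho_R V1 E1 + rho_R V2 E2"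
proof -
  have fin1: "finite V1" and fin2: "finite V2" using assms by (auto simp: simple_graph_def)
  obtain m1 where m1: "good_replication V1 E1 m1" "rho_R V1 E1 = sum m1 V1"
    using rho_attained[OF fin1] by blast
  obtain m2 where m2: "good_replication V2 E2 m2" "rho_R V2 E2 = sum m2 V2"
    using rho_attained[OF fin2] by blast
  show ?thesis
    unfolding rho_R_def[of "join_V V1 V2"]
  proof (rule Least_equality)
    show "\<exists>m. good_replication (join_V V1 V2) (join_E E1 E2) m \<and>
        rho_R V1 E1 + rho_R V2 E2 = sum m (join_V V1 V2)"
      using good_join_combine[OF m1(1) m2(1)] m1(2) m2(2) sum_join[OF fin1 fin2, of "case_sum m1 m2"]
      by (auto simp: comp_def)
  next
    fix n assume "\<exists>m. good_replication (join_V V1 V2) (join_E E1 E2) m \<and> n = sum m (join_V V1 V2)"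
    then obtain m where m: "good_replication (join_V V1 V2) (join_E E1 E2) m" "n = sum m (join_V V1 V2)"
      by blast
    have "rho_R V1 E1 \<le> sum (m \<circ> Inl) V1" by (rule rho_le[OF good_join_left[OF fin1 fin2 m(1)]])
    moreover have "rho_R V2 E2 \<le> sum (m \<circ> Inr) V2" by (rule rho_le[OF good_join_right[OF fin1 fin2 m(1)]])
    ultimately show "rho_R V1 E1 + rho_R V2 E2 \<le> n" using m(2) sum_join[OF fin1 fin2, of m] by simp
  qed
qed

end
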